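(* In the setting described in the context, $\sum_{i=1}^{m-1} L_1(\overline{p}_i,\overline{q}_i)\le 4\cdot L_1(p_1',t)$, where $p_1'$ is the vertical projection of $p_1$ onto $\ell_t^-$ and $L_1$ denotes the $L_1$ distance.
   Context: $P$ is a finite set of points in the plane, $s,t\in P$ distinct, and coordinates are chosen so that $t=(0,0)$ and $s$ lies in $C_2^t$ below the line $\ell_t^-=\{x+y=0\}$. Cones: $C_0^v=\{x\ge v_x,y\le v_y\}$, $C_1^v=\{x\ge v_x,y\ge v_y\}$, $C_2^v=\{x\le v_x,y\ge v_y\}$, $C_3^v=\{x\le v_x,y\le v_y\}$ with bisector directions $(1,-1),(1,1),(-1,1),(-1,-1)$. The $\Theta_4$-graph of $P$ has, for each $v\in P$ and cone $C_i^v$ containing a point of $P\setminus\{v\}$, a directed edge from $v$ to a point $w$ of $(P\setminus\{v\})\cap C_i^v$ minimizing the projection of $w-v$ onto the bisector direction (the neighbour of $v$ in $C_i^v$). For a point $p$, $\ell_p^+$ is the line through $p$ of slope $+1$, and $\overline{p}$ denotes the intersection point of $\ell_t^-$ and $\ell_p^+$. Algorithm: for a vertex $v$, let $T(v,\ell_t^-)=C_1^v\cap\{x+y\le0\}$ if $v_x+v_y<0$, $T(v,\ell_t^-)=C_3^v\cap\{x+y\ge0\}$ if $v_x+v_y>0$, and $\{v\}$ if $v_x+v_y=0$; $v$ is clean if $T(v,\ell_t^-)$ contains no point of $P$ other than $v$. Starting at $v=s$, while $v\ne t$: if $v$ is not clean, take a sweeping step (go to the neighbour of $v$ in $C_1^v$,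 resp. $C_3^v$); otherwise take a greedy step (go to the neighbour of $v$ in the cone $C_i^v$ containing $t$). Let $(p_1,q_1),\dots,(p_{m-1},q_{m-1})$ be, in order, the edges traversed by greedy steps, and set $p_m=t$. *)

theory Defs
  imports Complex_Main
begin

type_synonym pt = "real \<times> real"

definition cone :: "nat \<Rightarrow> pt \<Rightarrow> pt set" where
  "cone i v =
     (if i = 0 then {w. fst w \<ge> fst v \<and> snd w \<le> snd v}
      else if i = 1 then {w. fst w \<ge> fst v \<and> snd w \<ge> snd v}
      else if i = 2 then {w. fst w \<le> fst v \<and> snd w \<ge> snd v}
      else {w. fst w \<le> fst v \<and> snd w \<le> snd v})"

definition bisector :: "nat \<Rightarrow> pt" where
  "bisector i =
     (if i = 0 then (1, -1) else if i = 1 then (1, 1)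
      else if i = 2 then (-1, 1) else (-1, -1))"

definition proj :: "nat \<Rightarrow> pt \<Rightarrow> pt \<Rightarrow> real" where
  "proj i v w = ((fst w - fst v) * fst (bisector i) + (snd w - snd v) * snd (bisector i)) / sqrt 2"

definition is_neighbour :: "pt set \<Rightarrow> pt \<Rightarrow> nat \<Rightarrow> pt \<Rightarrow> bool" where
  "is_neighbour P v i w \<longleftrightarrow>
     w \<in> (P - {v}) \<inter> cone i v \<and> (\<forall>u \<in> (P - {v}) \<inter> cone i v. proj i v w \<le> proj i v u)"

definition theta4_nbr :: "pt set \<Rightarrow> (pt \<Rightarrow> nat \<Rightarrow> pt) \<Rightarrow> bool" where
  "theta4_nbr P nbr \<longleftrightarrow>
     (\<forall>v \<in> P. \<forall>i < 4. (P - {v}) \<inter> cone i v \<noteq> {} \<longrightarrow> is_neighbour P v i (nbr v i))"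

text \<open>The region T(v, l_t^-) for the line x + y = 0.\<close>
definition Treg :: "pt \<Rightarrow> pt set" where
  "Treg v =
     (if fst v + snd v < 0 then cone 1 v \<inter> {w. fst w + snd w \<le> 0}
      else if fst v + snd v > 0 then cone 3 v \<inter> {w. fst w + snd w \<ge> 0}
      else {v})"

definition clean :: "pt set \<Rightarrow> pt \<Rightarrow> bool" where
  "clean P v \<longleftrightarrow> Treg v \<inter> P \<subseteq> {v}"

definition route_step :: "pt set \<Rightarrow> (pt \<Rightarrow> nat \<Rightarrow> pt) \<Rightarrow> pt \<Rightarrow> pt \<Rightarrow> pt \<Rightarrow> bool" where
  "route_step P nbr t v w \<longleftrightarrow>
     (if \<not> clean P v then w = nbr v (if fst v + snd v < 0 then 1 else 3)
      else (\<exists>i < 4. t \<in> cone i v \<and> w = nbr v i))"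

definition is_route :: "pt set \<Rightarrow> (pt \<Rightarrow> nat \<Rightarrow> pt) \<Rightarrow> pt \<Rightarrow> pt \<Rightarrow> pt list \<Rightarrow> bool" where
  "is_route P nbr s t vs \<longleftrightarrow>
     vs \<noteq> [] \<and> hd vs = s \<and> last vs = t \<and>
     (\<forall>j < length vs - 1. vs ! j \<noteq> t \<and> route_step P nbr t (vs ! j) (vs ! Suc j))"

text \<open>The edges (p_1,q_1),...,(p_{m-1},q_{m-1}) traversed by greedy steps, in order.\<close>
definition greedy_edges :: "pt set \<Rightarrow> pt list \<Rightarrow> (pt \<times> pt) list" where
  "greedy_edges P vs = [(vs ! j, vs ! Suc j). j \<leftarrow> [0..<length vs - 1], clean P (vs ! j)]"

text \<open>p_1 (the start of the first greedy edge; p_m = t if there is none).\<close>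
definition first_greedy :: "pt set \<Rightarrow> pt list \<Rightarrow> pt \<Rightarrow> pt" where
  "first_greedy P vs t = (if greedy_edges P vs = [] then t else fst (hd (greedy_edges P vs)))"

text \<open>overline p: intersection of x + y = 0 with the slope +1 line through p.\<close>
definition bar :: "pt \<Rightarrow> pt" where
  "bar p = ((fst p - snd p) / 2, (snd p - fst p) / 2)"

definition vproj :: "pt \<Rightarrow> pt" where
  "vproj p = (fst p, - fst p)"

definition L1 :: "pt \<Rightarrow> pt \<Rightarrow> real" where
  "L1 p q = \<bar>fst p - fst q\<bar> + \<bar>snd p - snd q\<bar>"

end

theory Submission
  imports Defs
begin


lemma proj_le_iff: "proj i v w \<le> proj i v u \<longleftrightarrow>
   (fst w - fst v) * fst (bisector i) + (snd w - snd v) * snd (bisector i) \<le>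
   (fst u - fst v) * fst (bisector i) + (snd u - snd v) * snd (bisector i)"
  unfolding proj_def by (simp add: divide_le_cancel)

lemma cone_simps:
  "cone 0 v = {w. fst w \<ge> fst v \<and> snd w \<le> snd v}"
  "cone 1 v = {w. fst w \<ge> fst v \<and> snd w \<ge> snd v}"
  "cone 2 v = {w. fst w \<le> fst v \<and> snd w \<ge> snd v}"
  "cone 3 v = {w. fst w \<le> fst v \<and> snd w \<le> snd v}"
  by (auto simp: cone_def)

lemma bis_simps: "bisector 0 = (1,-1)" "bisector 1 = (1,1)" "bisector 2 = (-1,1)" "bisector 3 = (-1,-1)"
  by (auto simp: bisector_def)

lemma nbr_props:
  assumes "theta4_nbr P nbr" "v \<in> P" "i < 4" "u \<in> P" "u \<noteq> v" "u \<in> cone i v"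
  shows "nbr v i \<in> P \<and> nbr v i \<noteq> v \<and> nbr v i \<in> cone i v \<and>
     (\<forall>u'\<in>P. u' \<noteq> v \<longrightarrow> u' \<in> cone i v \<longrightarrow> proj i v (nbr v i) \<le> proj i v u')"
proof -
  have "(P - {v}) \<inter> cone i v \<noteq> {}" using assms by auto
  then have "is_neighbour P v i (nbr v i)" using assms unfolding theta4_nbr_def by blast
  then show ?thesis unfolding is_neighbour_def by auto
qed

lemma Treg_neg: "fst v + snd v < 0 \<Longrightarrow> Treg v = cone 1 v \<inter> {w. fst w + snd w \<le> 0}"
  by (simp add: Treg_def)
lemma Treg_pos: "fst v + snd v > 0 \<Longrightarrow> Treg v = cone 3 v \<inter> {w. fst w + snd w \<ge> 0}"
  by (simp add: Treg_def)
lemma Treg_zero: "fst v + snd v = 0 \<Longrightarrow> Treg v = {v}"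
  by (simp add: Treg_def)

lemma clean_zero: "fst v + snd v = 0 \<Longrightarrow> clean P v"
  by (simp add: clean_def Treg_zero)

lemma greedy_cone:
  assumes "clean P v" "v \<noteq> (0,0)" "(0,0) \<in> P" "i < 4" "(0::real,0::real) \<in> cone i v"
  shows "(i = 0 \<and> fst v \<le> 0 \<and> snd v \<ge> 0) \<or> (i = 2 \<and> fst v \<ge> 0 \<and> snd v \<le> 0)"
proof -
  have i: "i = 0 \<or> i = 1 \<or> i = 2 \<or> i = 3" using assms(4) by auto
  have vne: "fst v \<noteq> 0 \<or> snd v \<noteq> 0" using assms(2) by (cases v) auto
  show ?thesis
  proof (cases "i = 1")
    case True
    then have c: "fst v \<le> 0" "snd v \<le> 0" using assms(5) by (auto simp: cone_def)
    then have "fst v + snd v < 0" using vne by auto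
    then have "(0,0) \<in> Treg v" using c by (simp add: Treg_neg cone_def)
    then show ?thesis using assms(1,2,3) unfolding clean_def by auto
  next
    case n1: False
    show ?thesis
    proof (cases "i = 3")
      case True
      then have c: "fst v \<ge> 0" "snd v \<ge> 0" using assms(5) by (auto simp: cone_def)
      then have "fst v + snd v > 0" using vne by auto
      then have "(0,0) \<in> Treg v" using c by (simp add: Treg_pos cone_def)
      then show ?thesis using assms(1,2,3) unfolding clean_def by auto
    next
      case False
      then show ?thesis using n1 i assms(5) by (auto simp: cone_def)
    qed
  qed
qed


lemma greedy_step:
  assumes "t = (0,0)" "t \<in> P" "theta4_nbr P nbr" "v \<in> P" "v \<noteq> t"
    "route_step P nbr t v w" "clean P v"
  shows "w \<in> P \<and> w \<noteq> v \<and>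
    (if fst v \<le> 0 \<and> snd v \<ge> 0 then
       w \<in> cone 0 v \<and> fst w - snd w \<le> 0 \<and>
       (\<forall>u\<in>P. u \<noteq> v \<longrightarrow> u \<in> cone 0 v \<longrightarrow> fst w - snd w \<le> fst u - snd u)
     else fst v \<ge> 0 \<and> snd v \<le> 0 \<and> w \<in> cone 2 v \<and> fst w - snd w \<ge> 0 \<and>
       (\<forall>u\<in>P. u \<noteq> v \<longrightarrow> u \<in> cone 2 v \<longrightarrow> fst u - snd u \<le> fst w - snd w))"
proof -
  obtain i where i: "i < 4" "t \<in> cone i v" "w = nbr v i"
    using assms(6,7) unfolding route_step_def by auto
  have gc: "(i = 0 \<and> fst v \<le> 0 \<and> snd v \<ge> 0) \<or> (i = 2 \<and> fst v \<ge> 0 \<and> snd v \<le> 0)"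
    using greedy_cone[OF assms(7)] assms i by auto
  have vne: "fst v \<noteq> 0 \<or> snd v \<noteq> 0" using assms(1,5) by (cases v) auto
  have np: "nbr v i \<in> P \<and> nbr v i \<noteq> v \<and> nbr v i \<in> cone i v \<and>
     (\<forall>u'\<in>P. u' \<noteq> v \<longrightarrow> u' \<in> cone i v \<longrightarrow> proj i v (nbr v i) \<le> proj i v u')"
    using nbr_props[OF assms(3,4) i(1) assms(2) _ i(2)] assms(5) by auto
  show ?thesis
  proof (cases "fst v \<le> 0 \<and> snd v \<ge> 0")
    case True
    then have i0: "i = 0" using gc vne by auto
    have "proj 0 v w \<le> proj 0 v t" using np i i0 assms by auto
    then have "fst w - snd w \<le> 0" using assms(1) by (simp add: proj_le_iff bisector_def)
    moreover have "\<forall>u\<in>P. u \<noteq> v \<longrightarrow> u \<in> cone 0 v \<longrightarrow> fst w - snd w \<le> fst u - snd u"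
    proof (intro ballI impI)
      fix u assume "u \<in> P" "u \<noteq> v" "u \<in> cone 0 v"
      then have "proj 0 v w \<le> proj 0 v u" using np i i0 by auto
      then show "fst w - snd w \<le> fst u - snd u" by (simp add: proj_le_iff bisector_def)
    qed
    ultimately show ?thesis using True np i i0 by auto
  next
    case False
    then have i2: "i = 2" and c: "fst v \<ge> 0" "snd v \<le> 0" using gc by auto
    have "proj 2 v w \<le> proj 2 v t" using np i i2 assms by auto
    then have "fst w - snd w \<ge> 0" using assms(1) by (simp add: proj_le_iff bisector_def)
    moreover have "\<forall>u\<in>P. u \<noteq> v \<longrightarrow> u \<in> cone 2 v \<longrightarrow> fst u - snd u \<le> fst w - snd w"
    proof (intro ballI impI)
      fix u assume "u \<in> P" "u \<noteq> v" "u \<in> cone 2 v"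
      then have "proj 2 v w \<le> proj 2 v u" using np i i2 by auto
      then show "fst u - snd u \<le> fst w - snd w" by (simp add: proj_le_iff bisector_def)
    qed
    ultimately show ?thesis using False c np i i2 by auto
  qed
qed

lemma sweep_step:
  assumes "theta4_nbr P nbr" "v \<in> P" "route_step P nbr t v w" "\<not> clean P v"
  shows "w \<in> P \<and> w \<noteq> v \<and>
    (if fst v + snd v < 0 then w \<in> cone 1 v \<and> fst w + snd w \<le> 0
     else fst v + snd v > 0 \<and> w \<in> cone 3 v \<and> fst w + snd w \<ge> 0)"
proof -
  obtain u where u: "u \<in> Treg v" "u \<in> P" "u \<noteq> v" using assms(4) unfolding clean_def by auto
  have fne: "fst v + snd v \<noteq> 0" using assms(4) clean_zero[of v P] by auto
  show ?thesis
  proof (cases "fst v + snd v < 0")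
    case True
    then have w: "w = nbr v 1" using assms(3,4) unfolding route_step_def by auto
    have uc: "u \<in> cone 1 v" "fst u + snd u \<le> 0" using u True by (auto simp: Treg_neg)
    have np: "nbr v 1 \<in> P \<and> nbr v 1 \<noteq> v \<and> nbr v 1 \<in> cone 1 v \<and>
     (\<forall>u'\<in>P. u' \<noteq> v \<longrightarrow> u' \<in> cone 1 v \<longrightarrow> proj 1 v (nbr v 1) \<le> proj 1 v u')"
      using nbr_props[OF assms(1,2) _ u(2,3) uc(1)] by auto
    then have "proj 1 v w \<le> proj 1 v u" using u uc w by auto
    then have "fst w + snd w \<le> fst u + snd u" by (simp add: proj_le_iff bisector_def)
    then show ?thesis using True np w uc by auto
  next
    case False
    then have F: "fst v + snd v > 0" using fne by auto
    then have w: "w = nbr v 3" using assms(3,4) unfolding route_step_def by auto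
    have uc: "u \<in> cone 3 v" "fst u + snd u \<ge> 0" using u F by (auto simp: Treg_pos)
    have np: "nbr v 3 \<in> P \<and> nbr v 3 \<noteq> v \<and> nbr v 3 \<in> cone 3 v \<and>
     (\<forall>u'\<in>P. u' \<noteq> v \<longrightarrow> u' \<in> cone 3 v \<longrightarrow> proj 3 v (nbr v 3) \<le> proj 3 v u')"
      using nbr_props[OF assms(1,2) _ u(2,3) uc(1)] by auto
    then have "proj 3 v w \<le> proj 3 v u" using u uc w by auto
    then have "fst w + snd w \<ge> fst u + snd u" by (simp add: proj_le_iff bisector_def)
    then show ?thesis using F np w uc by auto
  qed
qed

lemma step_r:
  assumes "t = (0,0)" "t \<in> P" "theta4_nbr P nbr" "v \<in> P" "v \<noteq> t"
    "route_step P nbr t v w"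
  shows "w \<in> P \<and> w \<noteq> v \<and> max \<bar>fst w\<bar> \<bar>snd w\<bar> \<le> max \<bar>fst v\<bar> \<bar>snd v\<bar>"
proof (cases "clean P v")
  case True
  note G = greedy_step[OF assms True]
  show ?thesis
  proof (cases "fst v \<le> 0 \<and> snd v \<ge> 0")
    case c: True
    then show ?thesis using G by (auto simp: cone_def split: if_splits)
  next
    case c: False
    then show ?thesis using G by (auto simp: cone_def split: if_splits)
  qed
next
  case False
  note S = sweep_step[OF assms(3,4,6) False]
  show ?thesis
  proof (cases "fst v + snd v < 0")
    case c: True
    then show ?thesis using S by (auto simp: cone_def split: if_splits)
  next
    case c: False
    then show ?thesis using S by (auto simp: cone_def split: if_splits)
  qed
qed


lemma step_det:
  assumes "t = (0,0)" "t \<in> P" "v \<noteq> t" "route_step P nbr t v w1" "route_step P nbr t v w2"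
  shows "w1 = w2"
proof (cases "clean P v")
  case True
  obtain i where i: "i < 4" "t \<in> cone i v" "w1 = nbr v i"
    using assms(4) True unfolding route_step_def by auto
  obtain j where j: "j < 4" "t \<in> cone j v" "w2 = nbr v j"
    using assms(5) True unfolding route_step_def by auto
  have vne: "fst v \<noteq> 0 \<or> snd v \<noteq> 0" using assms(1,3) by (cases v) auto
  have "i = j" using greedy_cone[OF True, of i] greedy_cone[OF True, of j] i j assms vne by auto
  then show ?thesis using i j by simp
next
  case False
  then show ?thesis using assms(4,5) unfolding route_step_def by auto
qed

locale rt =
  fixes P s t nbr vs
  assumes t0: "t = (0,0)" and tP: "t \<in> P" and sP: "s \<in> P"
    and th: "theta4_nbr P nbr" and rte: "is_route P nbr s t vs"
begin

lemma ne: "vs \<noteq> []" and hd0: "vs ! 0 = s" and lst: "vs ! (length vs - 1) = t"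
  and stp: "\<And>j. j < length vs - 1 \<Longrightarrow> vs ! j \<noteq> t \<and> route_step P nbr t (vs ! j) (vs ! Suc j)"
  using rte unfolding is_route_def by (auto simp: hd_conv_nth last_conv_nth)

lemma inP: "j < length vs \<Longrightarrow> vs ! j \<in> P"
proof (induction j)
  case 0 then show ?case using hd0 sP by simp
next
  case (Suc j)
  then have "j < length vs - 1" by simp
  then show ?case using step_r[OF t0 tP th Suc.IH] stp Suc by auto
qed

lemma r_step: "j < length vs - 1 \<Longrightarrow>
   max \<bar>fst (vs ! Suc j)\<bar> \<bar>snd (vs ! Suc j)\<bar> \<le> max \<bar>fst (vs ! j)\<bar> \<bar>snd (vs ! j)\<bar>"
  using step_r[OF t0 tP th inP] stp by auto

lemma r_mono: "i \<le> j \<Longrightarrow> j < length vs \<Longrightarrow>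
   max \<bar>fst (vs ! j)\<bar> \<bar>snd (vs ! j)\<bar> \<le> max \<bar>fst (vs ! i)\<bar> \<bar>snd (vs ! i)\<bar>"
proof (induction j)
  case 0 then show ?case by simp
next
  case (Suc j)
  show ?case
  proof (cases "i = Suc j")
    case True then show ?thesis by simp
  next
    case False
    then have "i \<le> j" using Suc by simp
    have "j < length vs - 1" using Suc by simp
    then have "max \<bar>fst (vs ! Suc j)\<bar> \<bar>snd (vs ! Suc j)\<bar> \<le> max \<bar>fst (vs ! j)\<bar> \<bar>snd (vs ! j)\<bar>"
      by (rule r_step)
    moreover have "max \<bar>fst (vs ! j)\<bar> \<bar>snd (vs ! j)\<bar> \<le> max \<bar>fst (vs ! i)\<bar> \<bar>snd (vs ! i)\<bar>"
      using Suc \<open>i \<le> j\<close> by simp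
    ultimately show ?thesis by linarith
  qed
qed

lemma periodic:
  assumes "i < j" "vs ! i = vs ! j"
  shows "j + k < length vs \<Longrightarrow> vs ! (i + k) = vs ! (j + k)"
proof (induction k)
  case 0 then show ?case using assms by simp
next
  case (Suc k)
  then have a: "j + k < length vs - 1" by simp
  then have b: "i + k < length vs - 1" using assms by simp
  have "route_step P nbr t (vs ! (j+k)) (vs ! Suc (j+k))" "vs ! (j+k) \<noteq> t" using stp[OF a] by auto
  moreover have "route_step P nbr t (vs ! (i+k)) (vs ! Suc (i+k))" using stp[OF b] by auto
  ultimately show ?case using step_det[OF t0 tP] Suc by auto
qed

lemma dist: assumes "i < j" "j < length vs" shows "vs ! i \<noteq> vs ! j"
proof
  assume eq: "vs ! i = vs ! j"
  define k where "k = length vs - 1 - j"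
  have "vs ! (i + k) = vs ! (j + k)" using periodic[OF assms(1) eq, of k] assms k_def by simp
  moreover have "j + k = length vs - 1" using assms k_def by simp
  moreover have "i + k < length vs - 1" using assms k_def by simp
  ultimately show False using stp lst by metis
qed


lemma maxabs: "max \<bar>a\<bar> \<bar>b\<bar> \<le> (M::real) \<Longrightarrow> -M \<le> a \<and> a \<le> M \<and> -M \<le> b \<and> b \<le> M"
  by (auto simp: abs_le_iff)

lemma class_mono:
  assumes i: "i < length vs - 1" "clean P (vs ! i)" and j: "i < j" "j < length vs"
  defines "p \<equiv> vs ! i" and "q \<equiv> vs ! Suc i" and "pb \<equiv> vs ! j"
  shows "fst p \<le> 0 \<and> snd p \<ge> 0 \<longrightarrow> fst p + snd p \<le> 0 \<longrightarrow> fst pb + snd pb \<le> 0 \<longrightarrow> fst q - snd q \<le> fst pb - snd pb"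
    and "fst p \<le> 0 \<and> snd p \<ge> 0 \<longrightarrow> fst p + snd p > 0 \<longrightarrow> fst pb + snd pb > 0 \<longrightarrow> fst q - snd q \<le> fst pb - snd pb"
    and "\<not>(fst p \<le> 0 \<and> snd p \<ge> 0) \<longrightarrow> fst p + snd p \<le> 0 \<longrightarrow> fst pb + snd pb \<le> 0 \<longrightarrow> fst pb - snd pb \<le> fst q - snd q"
    and "\<not>(fst p \<le> 0 \<and> snd p \<ge> 0) \<longrightarrow> fst p + snd p > 0 \<longrightarrow> fst pb + snd pb > 0 \<longrightarrow> fst pb - snd pb \<le> fst q - snd q"
proof -
  have pP: "p \<in> P" and pbP: "pb \<in> P" using inP i j p_def pb_def by auto
  have pt: "p \<noteq> t" and rs: "route_step P nbr t p q" using stp[OF i(1)] p_def q_def by auto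
  have pbp: "pb \<noteq> p" using dist[OF j] p_def pb_def by auto
  have r: "max \<bar>fst pb\<bar> \<bar>snd pb\<bar> \<le> max \<bar>fst p\<bar> \<bar>snd p\<bar>" using r_mono[of i j] j p_def pb_def by simp
  note G = greedy_step[OF t0 tP th pP pt rs i(2)[folded p_def]]
  have cl: "Treg p \<inter> P \<subseteq> {p}" using i(2) p_def clean_def by auto
  show "fst p \<le> 0 \<and> snd p \<ge> 0 \<longrightarrow> fst p + snd p \<le> 0 \<longrightarrow> fst pb + snd pb \<le> 0 \<longrightarrow> fst q - snd q \<le> fst pb - snd pb"
  proof (intro impI, rule ccontr)
    assume Q: "fst p \<le> 0 \<and> snd p \<ge> 0" and f1: "fst p + snd p \<le> 0" and f2: "fst pb + snd pb \<le> 0"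
      and c: "\<not> fst q - snd q \<le> fst pb - snd pb"
    have "pb \<notin> cone 0 p" using G Q c pbP pbp by auto
    moreover have "max \<bar>fst p\<bar> \<bar>snd p\<bar> = - fst p" using Q f1 by auto
    ultimately have "snd pb > snd p" "fst pb \<ge> fst p" using maxabs[OF r] by (auto simp: cone_def)
    show False
    proof (cases "fst p + snd p < 0")
      case True
      then have "pb \<in> Treg p" using \<open>snd pb > snd p\<close> \<open>fst pb \<ge> fst p\<close> f2 by (simp add: Treg_neg cone_def)
      then show False using cl pbP pbp by auto
    next
      case False then show False using f1 f2 \<open>snd pb > snd p\<close> \<open>fst pb \<ge> fst p\<close> by linarith
    qed
  qed
  show "fst p \<le> 0 \<and> snd p \<ge> 0 \<longrightarrow> fst p + snd p > 0 \<longrightarrow> fst pb + snd pb > 0 \<longrightarrow> fst q - snd q \<le> fst pb - snd pb"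
  proof (intro impI, rule ccontr)
    assume Q: "fst p \<le> 0 \<and> snd p \<ge> 0" and f1: "fst p + snd p > 0" and f2: "fst pb + snd pb > 0"
      and c: "\<not> fst q - snd q \<le> fst pb - snd pb"
    have "pb \<notin> cone 0 p" using G Q c pbP pbp by auto
    moreover have "max \<bar>fst p\<bar> \<bar>snd p\<bar> = snd p" using Q f1 by auto
    ultimately have "fst pb < fst p" "snd pb \<le> snd p" using maxabs[OF r] by (auto simp: cone_def)
    then have "pb \<in> Treg p" using f1 f2 by (simp add: Treg_pos cone_def)
    then show False using cl pbP pbp by auto
  qed
  show "\<not>(fst p \<le> 0 \<and> snd p \<ge> 0) \<longrightarrow> fst p + snd p \<le> 0 \<longrightarrow> fst pb + snd pb \<le> 0 \<longrightarrow> fst pb - snd pb \<le> fst q - snd q"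
  proof (intro impI, rule ccontr)
    assume Q: "\<not>(fst p \<le> 0 \<and> snd p \<ge> 0)" and f1: "fst p + snd p \<le> 0" and f2: "fst pb + snd pb \<le> 0"
      and c: "\<not> fst pb - snd pb \<le> fst q - snd q"
    have Q2: "fst p \<ge> 0" "snd p \<le> 0" using G Q by auto
    have "pb \<notin> cone 2 p" using G Q c pbP pbp by auto
    moreover have "max \<bar>fst p\<bar> \<bar>snd p\<bar> = - snd p" using Q2 f1 by auto
    ultimately have "fst pb > fst p" "snd pb \<ge> snd p" using maxabs[OF r] by (auto simp: cone_def)
    show False
    proof (cases "fst p + snd p < 0")
      case True
      then have "pb \<in> Treg p" using \<open>fst pb > fst p\<close> \<open>snd pb \<ge> snd p\<close> f2 by (simp add: Treg_neg cone_def)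
      then show False using cl pbP pbp by auto
    next
      case False then show False using f1 f2 \<open>fst pb > fst p\<close> \<open>snd pb \<ge> snd p\<close> by linarith
    qed
  qed
  show "\<not>(fst p \<le> 0 \<and> snd p \<ge> 0) \<longrightarrow> fst p + snd p > 0 \<longrightarrow> fst pb + snd pb > 0 \<longrightarrow> fst pb - snd pb \<le> fst q - snd q"
  proof (intro impI, rule ccontr)
    assume Q: "\<not>(fst p \<le> 0 \<and> snd p \<ge> 0)" and f1: "fst p + snd p > 0" and f2: "fst pb + snd pb > 0"
      and c: "\<not> fst pb - snd pb \<le> fst q - snd q"
    have Q2: "fst p \<ge> 0" "snd p \<le> 0" using G Q by auto
    have "pb \<notin> cone 2 p" using G Q c pbP pbp by auto
    moreover have "max \<bar>fst p\<bar> \<bar>snd p\<bar> = fst p" using Q2 f1 by auto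
    ultimately have "snd pb < snd p" "fst pb \<le> fst p" using maxabs[OF r] by (auto simp: cone_def)
    then have "pb \<in> Treg p" using f1 f2 by (simp add: Treg_pos cone_def)
    then show False using cl pbP pbp by auto
  qed
qed


end





lemma intervals:
  fixes lo hi :: "nat \<Rightarrow> real"
  shows "J \<subseteq> {..<n} \<Longrightarrow> \<forall>j\<in>J. A \<le> lo j \<and> lo j \<le> hi j \<and> hi j \<le> B \<Longrightarrow>
    \<forall>i\<in>J. \<forall>j\<in>J. i < j \<longrightarrow> hi i \<le> lo j \<Longrightarrow> A \<le> B \<Longrightarrow> (\<Sum>j\<in>J. hi j - lo j) \<le> B - A"
proof (induction n arbitrary: J B)
  case 0 then show ?case by simp
next
  case (Suc n)
  show ?case
  proof (cases "n \<in> J")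
    case False
    then have "J \<subseteq> {..<n}" using Suc.prems(1) by (auto simp: less_Suc_eq)
    then show ?thesis using Suc.IH[of J B] Suc.prems(2,3,4) by simp
  next
    case True
    define J' where "J' = J - {n}"
    have J'sub: "J' \<subseteq> {..<n}" using Suc.prems(1) J'_def by (auto simp: less_Suc_eq)
    have fin: "finite J'" using J'sub finite_subset by blast
    have J: "J = insert n J'" "n \<notin> J'" using True J'_def by auto
    have a1: "\<forall>j\<in>J'. A \<le> lo j \<and> lo j \<le> hi j \<and> hi j \<le> lo n"
    proof
      fix j assume j: "j \<in> J'"
      then have "j < n" "j \<in> J" using J'sub J'_def by auto
      then show "A \<le> lo j \<and> lo j \<le> hi j \<and> hi j \<le> lo n" using Suc.prems(2,3) True by simp
    qed
    have a2: "\<forall>i\<in>J'. \<forall>j\<in>J'. i < j \<longrightarrow> hi i \<le> lo j" using Suc.prems(3) J'_def by simp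
    have a3: "A \<le> lo n" using Suc.prems(2) True by simp
    have "(\<Sum>j\<in>J'. hi j - lo j) \<le> lo n - A" using Suc.IH[OF J'sub a1 a2 a3] .
    moreover have "(\<Sum>j\<in>J. hi j - lo j) = (hi n - lo n) + (\<Sum>j\<in>J'. hi j - lo j)"
      using J fin by simp
    moreover have "hi n \<le> B" using Suc.prems(2) True by simp
    ultimately show ?thesis by linarith
  qed
qed



lemma class_sum:
  fixes G H :: "nat \<Rightarrow> real" and sg a :: real
  assumes "K \<subseteq> {..<n}" "a \<ge> 0" "sg = 1 \<or> sg = -1"
    "\<forall>j\<in>K. -2*a \<le> sg * G j \<and> sg * G j \<le> sg * H j \<and> sg * H j \<le> 0"
    "\<forall>i\<in>K. \<forall>j\<in>K. i < j \<longrightarrow> sg * H i \<le> sg * G j"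
  shows "(\<Sum>j\<in>K. \<bar>G j - H j\<bar>) \<le> 2*a"
proof -
  have "(\<Sum>j\<in>K. \<bar>G j - H j\<bar>) = (\<Sum>j\<in>K. sg * H j - sg * G j)"
  proof (rule sum.cong)
    fix j assume "j \<in> K"
    then have "sg * G j \<le> sg * H j" using assms(4) by auto
    then show "\<bar>G j - H j\<bar> = sg * H j - sg * G j" using assms(3) by auto
  qed simp
  also have "\<dots> \<le> 0 - (-2*a)"
    by (rule intervals[OF assms(1)]) (use assms(2,4,5) in auto)
  finally show ?thesis by simp
qed




lemma L1_bar: "L1 (bar p) (bar q) = \<bar>(fst p - snd p) - (fst q - snd q)\<bar>"
proof -
  define d where "d = (fst p - snd p) - (fst q - snd q)"
  have 1: "fst (bar p) - fst (bar q) = d / 2" unfolding bar_def d_def by (simp add: diff_divide_distrib)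
  have 2: "snd (bar p) - snd (bar q) = - (d / 2)" unfolding bar_def d_def by (simp add: diff_divide_distrib)
  have "L1 (bar p) (bar q) = \<bar>d / 2\<bar> + \<bar>- (d / 2)\<bar>" unfolding L1_def 1 2 ..
  also have "\<dots> = \<bar>d\<bar>" by simp
  finally show ?thesis unfolding d_def .
qed

lemma ge_conv: "concat (map (\<lambda>x. if Q x then [f x] else []) xs) = map f (filter Q xs)"
  by (induction xs) auto




lemma filter_upt_hd:
  "filter Q [a..<b] = x # rest \<Longrightarrow> Q x \<and> a \<le> x \<and> x < b \<and> (\<forall>k. a \<le> k \<longrightarrow> k < x \<longrightarrow> \<not> Q k)"
proof (induction "b - a" arbitrary: a)
  case 0 then show ?case by simp
next
  case (Suc d)
  then have ab: "a < b" by simp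
  then have up: "[a..<b] = a # [Suc a..<b]" by (simp add: upt_rec)
  show ?case
  proof (cases "Q a")
    case True then show ?thesis using Suc.prems up ab by auto
  next
    case False
    then have "filter Q [Suc a..<b] = x # rest" using Suc.prems up by simp
    moreover have "d = b - Suc a" using Suc.hyps by simp
    ultimately have "Q x \<and> Suc a \<le> x \<and> x < b \<and> (\<forall>k. Suc a \<le> k \<longrightarrow> k < x \<longrightarrow> \<not> Q k)"
      using Suc.hyps by blast
    moreover have "\<forall>k. a \<le> k \<longrightarrow> k < x \<longrightarrow> \<not> Q k"
    proof (intro allI impI)
      fix k assume "a \<le> k" "k < x"
      show "\<not> Q k"
      proof (cases "k = a")
        case True then show ?thesis using False by simp
      next
        case False then have "Suc a \<le> k" using \<open>a \<le> k\<close> by simp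
        then show ?thesis using calculation \<open>k < x\<close> by blast
      qed
    qed
    ultimately show ?thesis by simp
  qed
qed




theorem corollary2:
  fixes P :: "pt set" and s t :: pt and nbr :: "pt \<Rightarrow> nat \<Rightarrow> pt" and vs :: "pt list"
  assumes "finite P" and "s \<in> P" and "t \<in> P" and "s \<noteq> t"
    and "t = (0, 0)" and "s \<in> cone 2 t" and "fst s + snd s < 0"
    and "theta4_nbr P nbr"
    and "is_route P nbr s t vs"
  shows "(\<Sum>(p, q) \<leftarrow> greedy_edges P vs. L1 (bar p) (bar q))
           \<le> 4 * L1 (vproj (first_greedy P vs t)) t"
proof -
  interpret rt P s t nbr vs using assms by unfold_locales auto
  define n where "n = length vs"
  define xs where "xs = filter (\<lambda>j. clean P (vs ! j)) [0..<n - 1]"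
  define J where "J = {j. j < n - 1 \<and> clean P (vs ! j)}"
  define G where "G j = fst (vs ! j) - snd (vs ! j)" for j
  define H where "H j = fst (vs ! Suc j) - snd (vs ! Suc j)" for j
  have GE: "greedy_edges P vs = map (\<lambda>j. (vs ! j, vs ! Suc j)) xs"
    unfolding greedy_edges_def xs_def n_def by (simp add: ge_conv)
  have setxs: "set xs = J" unfolding xs_def J_def by auto
  have finJ: "finite J" unfolding J_def by simp
  have LHS: "(\<Sum>(p, q) \<leftarrow> greedy_edges P vs. L1 (bar p) (bar q)) = (\<Sum>j\<in>J. \<bar>G j - H j\<bar>)"
  proof -
    have "(\<Sum>(p, q) \<leftarrow> greedy_edges P vs. L1 (bar p) (bar q)) = (\<Sum>j \<leftarrow> xs. \<bar>G j - H j\<bar>)"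
      unfolding GE by (simp add: L1_bar G_def H_def o_def)
    also have "\<dots> = (\<Sum>j\<in>set xs. \<bar>G j - H j\<bar>)"
      by (rule sum_list_distinct_conv_sum_set) (simp add: xs_def)
    finally show ?thesis using setxs by simp
  qed
  show ?thesis
  proof (cases "xs = []")
    case True
    then have "J = {}" using setxs by auto
    then show ?thesis unfolding LHS by (simp add: L1_def)
  next
    case False
    then obtain j0 rest where xs0: "xs = j0 # rest" by (cases xs) auto
    have h0: "clean P (vs ! j0) \<and> 0 \<le> j0 \<and> j0 < n - 1 \<and> (\<forall>k. 0 \<le> k \<longrightarrow> k < j0 \<longrightarrow> \<not> clean P (vs ! k))"
    proof -
      have "filter (\<lambda>j. clean P (vs ! j)) [0..<n - 1] = j0 # rest" using xs0 unfolding xs_def .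
      from filter_upt_hd[OF this] show ?thesis by blast
    qed
    have fg: "first_greedy P vs t = vs ! j0"
      unfolding first_greedy_def GE xs0 by (simp only: list.map list.sel fst_conv if_False list.distinct(2))
    have pre: "k \<le> j0 \<Longrightarrow> fst (vs ! k) \<le> 0 \<and> snd (vs ! k) \<ge> 0 \<and> fst (vs ! k) + snd (vs ! k) \<le> 0" for k
    proof (induction k)
      case 0 then show ?case using hd0 assms(5,6,7) by (simp add: cone_def)
    next
      case (Suc k)
      then have k: "k < n - 1" "k < j0" "fst (vs ! k) \<le> 0 \<and> snd (vs ! k) \<ge> 0 \<and> fst (vs ! k) + snd (vs ! k) \<le> 0"
        using h0 by auto
      have nc: "\<not> clean P (vs ! k)" using h0 k by auto
      have "fst (vs ! k) + snd (vs ! k) \<noteq> 0" using nc clean_zero[of "vs ! k" P] by auto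
      then have neg: "fst (vs ! k) + snd (vs ! k) < 0" using k by linarith
      have "route_step P nbr t (vs ! k) (vs ! Suc k)" using stp k n_def by auto
      then have "vs ! Suc k \<in> cone 1 (vs ! k) \<and> fst (vs ! Suc k) + snd (vs ! Suc k) \<le> 0"
        using sweep_step[OF th inP _ nc] neg k n_def by auto
      then show ?case using k by (auto simp: cone_def)
    qed
    define a where "a = - fst (vs ! j0)"
    have p1: "fst (vs ! j0) \<le> 0 \<and> snd (vs ! j0) \<ge> 0 \<and> fst (vs ! j0) + snd (vs ! j0) \<le> 0" using pre by simp
    have ra: "max \<bar>fst (vs ! j0)\<bar> \<bar>snd (vs ! j0)\<bar> = a" using p1 a_def by auto
    have a0: "a \<ge> 0" using p1 a_def by simp
    have RHS: "4 * L1 (vproj (first_greedy P vs t)) t = 8 * a"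
      unfolding fg using assms(5) a0 a_def by (simp add: L1_def vproj_def)
    have Jge: "j \<in> J \<Longrightarrow> j0 \<le> j" for j using h0 unfolding J_def by (metis (mono_tags, lifting) mem_Collect_eq not_le le0)
    have rj: "j \<in> J \<Longrightarrow> -a \<le> fst (vs ! j) \<and> fst (vs ! j) \<le> a \<and> -a \<le> snd (vs ! j) \<and> snd (vs ! j) \<le> a
        \<and> -a \<le> fst (vs ! Suc j) \<and> fst (vs ! Suc j) \<le> a \<and> -a \<le> snd (vs ! Suc j) \<and> snd (vs ! Suc j) \<le> a" for j
    proof -
      assume j: "j \<in> J"
      then have "j0 \<le> j" "j < n - 1" using Jge J_def by auto
      then have "max \<bar>fst (vs ! j)\<bar> \<bar>snd (vs ! j)\<bar> \<le> a"
        "max \<bar>fst (vs ! Suc j)\<bar> \<bar>snd (vs ! Suc j)\<bar> \<le> a"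
        using r_mono[of j0 j] r_mono[of j0 "Suc j"] ra n_def by auto
      then show ?thesis using maxabs by blast
    qed
    have gs: "j \<in> J \<Longrightarrow> vs ! Suc j \<in> P \<and> vs ! Suc j \<noteq> vs ! j \<and>
    (if fst (vs ! j) \<le> 0 \<and> snd (vs ! j) \<ge> 0 then
       vs ! Suc j \<in> cone 0 (vs ! j) \<and> fst (vs ! Suc j) - snd (vs ! Suc j) \<le> 0 \<and>
       (\<forall>u\<in>P. u \<noteq> vs ! j \<longrightarrow> u \<in> cone 0 (vs ! j) \<longrightarrow> fst (vs ! Suc j) - snd (vs ! Suc j) \<le> fst u - snd u)
     else fst (vs ! j) \<ge> 0 \<and> snd (vs ! j) \<le> 0 \<and> vs ! Suc j \<in> cone 2 (vs ! j) \<and> fst (vs ! Suc j) - snd (vs ! Suc j) \<ge> 0 \<and>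
       (\<forall>u\<in>P. u \<noteq> vs ! j \<longrightarrow> u \<in> cone 2 (vs ! j) \<longrightarrow> fst u - snd u \<le> fst (vs ! Suc j) - snd (vs ! Suc j)))" for j
    proof -
      assume j: "j \<in> J"
      then have j': "j < length vs - 1" "clean P (vs ! j)" using J_def n_def by auto
      have st: "vs ! j \<noteq> t \<and> route_step P nbr t (vs ! j) (vs ! Suc j)" using stp[OF j'(1)] .
      have jl: "j < length vs" using j'(1) by simp
      show ?thesis using greedy_step[OF assms(5) tP th inP[OF jl] conjunct1[OF st] conjunct2[OF st] j'(2)] .
    qed
    define c1 where "c1 j \<longleftrightarrow> (fst (vs ! j) \<le> 0 \<and> snd (vs ! j) \<ge> 0) \<and> fst (vs ! j) + snd (vs ! j) \<le> 0" for j
    define c2 where "c2 j \<longleftrightarrow> (fst (vs ! j) \<le> 0 \<and> snd (vs ! j) \<ge> 0) \<and> fst (vs ! j) + snd (vs ! j) > 0" for j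
    define c3 where "c3 j \<longleftrightarrow> \<not>(fst (vs ! j) \<le> 0 \<and> snd (vs ! j) \<ge> 0) \<and> fst (vs ! j) + snd (vs ! j) \<le> 0" for j
    define c4 where "c4 j \<longleftrightarrow> \<not>(fst (vs ! j) \<le> 0 \<and> snd (vs ! j) \<ge> 0) \<and> fst (vs ! j) + snd (vs ! j) > 0" for j
    define D where "D j = \<bar>G j - H j\<bar>" for j
    have split: "(\<Sum>j\<in>J. D j) = (\<Sum>j\<in>{j\<in>J. c1 j}. D j) + (\<Sum>j\<in>{j\<in>J. c2 j}. D j)
        + (\<Sum>j\<in>{j\<in>J. c3 j}. D j) + (\<Sum>j\<in>{j\<in>J. c4 j}. D j)"
    proof -
      have "(\<Sum>j\<in>J. D j) = (\<Sum>j\<in>J. (if c1 j then D j else 0) + (if c2 j then D j else 0)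
          + (if c3 j then D j else 0) + (if c4 j then D j else 0))"
        by (rule sum.cong) (auto simp: c1_def c2_def c3_def c4_def)
      then show ?thesis by (simp add: sum.distrib sum.inter_filter[OF finJ])
    qed
    have subn: "{j\<in>J. c j} \<subseteq> {..<n}" for c using J_def by auto
    have ij: "i \<in> J \<Longrightarrow> j \<in> J \<Longrightarrow> i < j \<Longrightarrow> i < length vs - 1 \<and> clean P (vs ! i) \<and> j < length vs" for i j
      using J_def n_def by auto
    have s1: "(\<Sum>j\<in>{j\<in>J. c1 j}. D j) \<le> 2 * a" unfolding D_def
    proof (rule class_sum[OF subn[of c1] a0, of 1])
      show "\<forall>j\<in>{j \<in> J. c1 j}. - 2 * a \<le> 1 * G j \<and> 1 * G j \<le> 1 * H j \<and> 1 * H j \<le> 0"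
        using rj gs unfolding c1_def G_def H_def by (force simp: cone_def)
      show "\<forall>i\<in>{j \<in> J. c1 j}. \<forall>j\<in>{j \<in> J. c1 j}. i < j \<longrightarrow> 1 * H i \<le> 1 * G j"
      proof (intro ballI impI)
        fix i j assume ii: "i \<in> {j \<in> J. c1 j}" and jj: "j \<in> {j \<in> J. c1 j}" and lt: "i < j"
        have X: "i < length vs - 1" "clean P (vs ! i)" "j < length vs" using ij[of i j] ii jj lt by auto
        have "H i \<le> G j" using class_mono(1)[OF X(1,2) lt X(3)] ii jj unfolding c1_def G_def H_def by auto
        then show "1 * H i \<le> 1 * G j" by simp
      qed
    qed simp
    have s2: "(\<Sum>j\<in>{j\<in>J. c2 j}. D j) \<le> 2 * a" unfolding D_def
    proof (rule class_sum[OF subn[of c2] a0, of 1])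
      show "\<forall>j\<in>{j \<in> J. c2 j}. - 2 * a \<le> 1 * G j \<and> 1 * G j \<le> 1 * H j \<and> 1 * H j \<le> 0"
        using rj gs unfolding c2_def G_def H_def by (force simp: cone_def)
      show "\<forall>i\<in>{j \<in> J. c2 j}. \<forall>j\<in>{j \<in> J. c2 j}. i < j \<longrightarrow> 1 * H i \<le> 1 * G j"
      proof (intro ballI impI)
        fix i j assume ii: "i \<in> {j \<in> J. c2 j}" and jj: "j \<in> {j \<in> J. c2 j}" and lt: "i < j"
        have X: "i < length vs - 1" "clean P (vs ! i)" "j < length vs" using ij[of i j] ii jj lt by auto
        have "H i \<le> G j" using class_mono(2)[OF X(1,2) lt X(3)] ii jj unfolding c2_def G_def H_def by auto
        then show "1 * H i \<le> 1 * G j" by simp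
      qed
    qed simp
    have s3: "(\<Sum>j\<in>{j\<in>J. c3 j}. D j) \<le> 2 * a" unfolding D_def
    proof (rule class_sum[OF subn[of c3] a0, of "-1"])
      show "\<forall>j\<in>{j \<in> J. c3 j}. - 2 * a \<le> -1 * G j \<and> -1 * G j \<le> -1 * H j \<and> -1 * H j \<le> 0"
        using rj gs unfolding c3_def G_def H_def by (force simp: cone_def)
      show "\<forall>i\<in>{j \<in> J. c3 j}. \<forall>j\<in>{j \<in> J. c3 j}. i < j \<longrightarrow> -1 * H i \<le> -1 * G j"
      proof (intro ballI impI)
        fix i j assume ii: "i \<in> {j \<in> J. c3 j}" and jj: "j \<in> {j \<in> J. c3 j}" and lt: "i < j"
        have X: "i < length vs - 1" "clean P (vs ! i)" "j < length vs" using ij[of i j] ii jj lt by auto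
        have "G j \<le> H i" using class_mono(3)[OF X(1,2) lt X(3)] ii jj unfolding c3_def G_def H_def by auto
        then show "-1 * H i \<le> -1 * G j" by simp
      qed
    qed simp
    have s4: "(\<Sum>j\<in>{j\<in>J. c4 j}. D j) \<le> 2 * a" unfolding D_def
    proof (rule class_sum[OF subn[of c4] a0, of "-1"])
      show "\<forall>j\<in>{j \<in> J. c4 j}. - 2 * a \<le> -1 * G j \<and> -1 * G j \<le> -1 * H j \<and> -1 * H j \<le> 0"
        using rj gs unfolding c4_def G_def H_def by (force simp: cone_def)
      show "\<forall>i\<in>{j \<in> J. c4 j}. \<forall>j\<in>{j \<in> J. c4 j}. i < j \<longrightarrow> -1 * H i \<le> -1 * G j"
      proof (intro ballI impI)
        fix i j assume ii: "i \<in> {j \<in> J. c4 j}" and jj: "j \<in> {j \<in> J. c4 j}" and lt: "i < j"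
        have X: "i < length vs - 1" "clean P (vs ! i)" "j < length vs" using ij[of i j] ii jj lt by auto
        have "G j \<le> H i" using class_mono(4)[OF X(1,2) lt X(3)] ii jj unfolding c4_def G_def H_def by auto
        then show "-1 * H i \<le> -1 * G j" by simp
      qed
    qed simp
    show ?thesis unfolding LHS RHS using split s1 s2 s3 s4 unfolding D_def by linarith
  qed
qed

end
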